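(* For every $n\ge1$, let $\mathcal{I}_n=\Pi_f\big((1-\omega^n)^{-1}\mathbb{Z}[\lambda]\big)\subset\Xi$. Then $$\#\mathcal{I}_n=|N(1-\omega^n)|=\omega^{-n}-\omega^{n}-2\left(\omega^{-n/2}-\omega^{n/2}\right)\cos(n\theta),$$ where $N$ denotes the field norm of $\mathbb{Q}(\lambda)/\mathbb{Q}$ and $\theta\in(0,\pi)$ is defined by $\cos\theta=\tfrac12\sqrt{\omega}(5-\omega)$. Moreover $\#\mathcal{I}_n$ is a multiple of $M_n$, the smallest positive integer lying in the ideal $(1-\omega^n)\mathbb{Z}[\lambda]$.
   Context: Let $\lambda$ be the real root of $x^3+x^2+x-1$, $\omega=\lambda^3=1-\lambda-\lambda^2\in(0,1)$; $\mathbb{Z}[\lambda]$ is the ring of integers of $\mathbb{Q}(\lambda)$. Every $x\in\mathbb{Q}(\lambda)$ is uniquely $x=r_0+r_1\lambda+r_2\lambda^2$ with $r_i\in\mathbb{Q}$; set $\Xi=\{\xi_0+\xi_1\lambda+\xi_2\lambda^2:\ \xi_i\in\mathbb{Q}\cap[0,1)\}$ and $\Pi_f(x)=\{r_0\}+\{r_1\}\lambda+\{r_2\}\lambda^2$, where $\{r\}=r-\lfloor r\rfloor$. *)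

theory Defs
  imports Complex_Main
begin

definition lam :: real where
  "lam = (THE x::real. x^3 + x^2 + x - 1 = 0)"

definition omega :: real where
  "omega = lam ^ 3"

definition Qlam :: "real set" where
  "Qlam = {of_rat a + of_rat b * lam + of_rat c * lam^2 | a b c. True}"

definition Zlam :: "real set" where
  "Zlam = {of_int a + of_int b * lam + of_int c * lam^2 | a b c. True}"

definition coords :: "real \<Rightarrow> rat \<times> rat \<times> rat" where
  "coords x = (THE (a,b,c). x = of_rat a + of_rat b * lam + of_rat c * lam^2)"

definition Pi_f :: "real \<Rightarrow> real" where
  "Pi_f x = (case coords x of (a,b,c) \<Rightarrow>
      of_rat (frac a) + of_rat (frac b) * lam + of_rat (frac c) * lam^2)"

text \<open>Field norm of Q(lambda)/Q: product of the images of x under the three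
  complex embeddings lambda \<mapsto> alpha, alpha a root of x^3+x^2+x-1.\<close>
definition fnorm :: "real \<Rightarrow> real" where
  "fnorm x = (case coords x of (a,b,c) \<Rightarrow>
     Re (\<Prod>\<alpha>\<in>{\<alpha>::complex. \<alpha>^3 + \<alpha>^2 + \<alpha> - 1 = 0}.
           of_rat a + of_rat b * \<alpha> + of_rat c * \<alpha>^2))"

definition I_set :: "nat \<Rightarrow> real set" where
  "I_set n = Pi_f ` ((\<lambda>z. z / (1 - omega ^ n)) ` Zlam)"

definition M :: "nat \<Rightarrow> nat" where
  "M n = (LEAST m::nat. m > 0 \<and> real m \<in> (\<lambda>z. (1 - omega ^ n) * z) ` Zlam)"

end

theory Submission
  imports Defs
begin


lemma cubic_mono:
  fixes x y :: real assumes "x < y"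
  shows "x^3 + x^2 + x - 1 < y^3 + y^2 + y - 1"
proof -
  have "y^3 + y^2 + y - 1 - (x^3 + x^2 + x - 1) = (y - x) * ((x + y/2 + 1/2)^2 + 3/4*(y + 1/3)^2 + 2/3)"
    by (simp add: algebra_simps power2_eq_square power3_eq_cube)
  moreover have "(y - x) * ((x + y/2 + 1/2)^2 + 3/4*(y + 1/3)^2 + 2/3) > 0"
    using assms by (intro mult_pos_pos) (auto intro: add_nonneg_pos)
  ultimately show ?thesis by linarith
qed

lemma cubic_ex: "\<exists>x::real. x^3 + x^2 + x - 1 = 0"
proof -
  have "\<exists>x\<ge>0. x \<le> 1 \<and> (\<lambda>x::real. x^3 + x^2 + x - 1) x = 0"
    by (rule IVT) (auto intro!: continuous_intros)
  then show ?thesis by auto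
qed

lemma cubic_uniq: "\<exists>!x::real. x^3 + x^2 + x - 1 = 0"
proof -
  obtain x :: real where x: "x^3 + x^2 + x - 1 = 0" using cubic_ex by blast
  have "y = x" if "y^3 + y^2 + y - 1 = 0" for y :: real
    using cubic_mono[of x y] cubic_mono[of y x] x that by (cases "x < y"; cases "y < x") auto
  with x show ?thesis by blast
qed

lemma lam_root: "lam^3 + lam^2 + lam - 1 = 0"
  unfolding lam_def by (rule theI', rule cubic_uniq)

lemma lam3: "lam^3 = 1 - lam - lam^2" using lam_root by simp

lemma lam_bounds: "1/2 < lam" "lam < 3/5"
proof -
  have n1: "lam \<noteq> 1/2" proof assume h: "lam = 1/2" from lam_root have "(1/2::real)^3 + (1/2)^2 + 1/2 - 1 = 0" by (simp only: h) then show False by (simp add: power3_eq_cube power2_eq_square) qed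
  have n2: "lam \<noteq> 3/5" proof assume h: "lam = 3/5" from lam_root have "(3/5::real)^3 + (3/5)^2 + 3/5 - 1 = 0" by (simp only: h) then show False by (simp add: power3_eq_cube power2_eq_square) qed
  show "1/2 < lam"
  proof (rule ccontr)
    assume "\<not> 1/2 < lam"
    then have "lam < 1/2" using n1 by simp
    then have "lam^3 + lam^2 + lam - 1 < (1/2::real)^3 + (1/2)^2 + 1/2 - 1"
      using cubic_mono[of lam "1/2"] by simp
    then show False using lam_root by (simp add: power3_eq_cube power2_eq_square)
  qed
  show "lam < 3/5"
  proof (rule ccontr)
    assume "\<not> lam < 3/5"
    then have "3/5 < lam" using n2 by simp
    then have "lam^3 + lam^2 + lam - 1 > (3/5::real)^3 + (3/5)^2 + 3/5 - 1"
      using cubic_mono[of "3/5" lam] by simp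
    then show False using lam_root by (simp add: power3_eq_cube power2_eq_square)
  qed
qed


lemma no_rat_root: "(t::rat)^3 + t^2 + t - 1 \<noteq> 0"
proof
  assume h: "t^3 + t^2 + t - 1 = 0"
  obtain p q where pq: "quotient_of t = (p, q)" by (cases "quotient_of t") auto
  have q0: "q > 0" using pq quotient_of_denom_pos by blast
  have cop: "coprime p q" using pq quotient_of_coprime by blast
  have tq: "t = of_int p / of_int q" using pq quotient_of_div by blast
  have tQ: "t * of_int q = of_int p" using tq q0 by simp
  define Q where "Q = (of_int q :: rat)"
  have "of_int (p^3 + p^2*q + p*q^2 - q^3) = (t*Q)^3 + (t*Q)^2*Q + (t*Q)*Q^2 - Q^3"
    unfolding Q_def tQ by simp
  also have "\<dots> = Q^3 * (t^3 + t^2 + t - 1)" by algebra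
  also have "\<dots> = 0" using h by simp
  finally have e: "p^3 + p^2*q + p*q^2 - q^3 = 0" by (simp only: of_int_eq_0_iff)
  have "p^3 = q * (q^2 - p^2 - p*q)" using e by (simp add: algebra_simps power2_eq_square power3_eq_cube)
  then have qd: "q dvd p^3" by simp
  have "coprime q (p^3)" using cop by (simp add: coprime_commute)
  then have "is_unit q" by (rule coprime_common_divisor[OF _ dvd_refl qd])
  then have "q \<le> 1" using zdvd_imp_le by auto
  then have q1: "q = 1" using q0 by simp
  have "p * (p^2 + p + 1) = 1" using e q1 by (simp add: algebra_simps power2_eq_square power3_eq_cube)
  then have "p dvd 1" by (metis dvd_triv_left)
  then have "\<bar>p\<bar> = 1" by (simp add: zdvd1_eq)
  then have "p = 1 \<or> p = -1" by auto
  then show False using e q1 by auto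
qed

definition emb :: "rat \<times> rat \<times> rat \<Rightarrow> real" where
  "emb w = (case w of (a,b,c) \<Rightarrow> of_rat a + of_rat b * lam + of_rat c * lam^2)"

lemma lam_not_rat: "of_rat t \<noteq> lam"
proof
  assume h: "of_rat t = lam"
  have "of_rat (t^3 + t^2 + t - 1) = (of_rat t)^3 + (of_rat t)^2 + of_rat t - (1::real)"
    by (simp add: of_rat_add of_rat_diff of_rat_power)
  then have "of_rat (t^3 + t^2 + t - 1) = (0::real)" using lam_root unfolding h by simp
  then show False using no_rat_root[of t] by (simp only: of_rat_eq_0_iff)
qed

lemma lin_indep:
  assumes "of_rat a + of_rat b * lam + of_rat c * lam^2 = 0"
  shows "a = 0 \<and> b = 0 \<and> c = 0"
proof (cases "c = 0")
  case c0: True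
  show ?thesis
  proof (cases "b = 0")
    case True
    then show ?thesis using c0 assms by simp
  next
    case False
    have "lam = of_rat (- a / b)" using assms c0 False by (simp add: of_rat_divide field_simps of_rat_minus)
    then show ?thesis using lam_not_rat by metis
  qed
next
  case False
  define p where "p = - b / c"
  define q where "q = - a / c"
  have l2: "lam^2 = of_rat p * lam + of_rat q"
    using assms False unfolding p_def q_def by (simp add: of_rat_divide field_simps of_rat_minus)
  have l3: "lam^3 = of_rat (p^2 + q) * lam + of_rat (p*q)"
  proof -
    have "lam^3 = lam * lam^2" by (simp add: power3_eq_cube power2_eq_square)
    also have "\<dots> = lam * (of_rat p * lam + of_rat q)" using l2 by simp
    also have "\<dots> = of_rat p * lam^2 + of_rat q * lam" by (simp add: algebra_simps power2_eq_square)
    also have "\<dots> = of_rat (p^2 + q) * lam + of_rat (p*q)" unfolding l2 by (simp add: algebra_simps of_rat_add of_rat_mult power2_eq_square)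
    finally show ?thesis .
  qed
  define r where "r = p^2 + q + p + 1"
  have lin: "of_rat r * lam + of_rat (p*q + q - 1) = 0"
  proof -
    have "0 = lam^3 + lam^2 + lam - 1" using lam_root by simp
    also have "\<dots> = of_rat (p^2 + q) * lam + of_rat (p*q) + (of_rat p * lam + of_rat q) + lam - 1"
      unfolding l3 l2 by simp
    also have "\<dots> = of_rat r * lam + of_rat (p*q + q - 1)"
      unfolding r_def by (simp add: of_rat_add of_rat_mult of_rat_diff algebra_simps)
    finally show ?thesis by simp
  qed
  show ?thesis
  proof (cases "r = 0")
    case False
    have "of_rat r * lam = - of_rat (p*q + q - 1)" using lin by (simp add: eq_neg_iff_add_eq_0)
    moreover have "of_rat r \<noteq> (0::real)" using False by simp
    ultimately have "lam = - of_rat (p*q + q - 1) / of_rat r" by (simp add: field_simps)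
    then have "lam = of_rat (- (p*q + q - 1) / r)" by (simp only: of_rat_divide of_rat_minus)
    then show ?thesis using lam_not_rat by metis
  next
    case True
    then have "p*q + q - 1 = 0" using lin by simp
    moreover have "q = -(p^2+p+1)" using True unfolding r_def by simp
    ultimately have e2: "p*(-(p^2+p+1)) + (-(p^2+p+1)) - 1 = 0" by simp
    have "(-(1+p))^3 + (-(1+p))^2 + (-(1+p)) - 1 = p*(-(p^2+p+1)) + (-(p^2+p+1)) - 1"
      by (simp add: algebra_simps power2_eq_square power3_eq_cube)
    then have "(-(1+p))^3 + (-(1+p))^2 + (-(1+p)) - 1 = 0" using e2 by simp
    then show ?thesis using no_rat_root by blast
  qed
qed

lemma emb_inj: "emb v = emb w \<Longrightarrow> v = w"
proof -
  assume h: "emb v = emb w"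
  obtain a b c where v: "v = (a,b,c)" by (cases v) auto
  obtain a' b' c' where w: "w = (a',b',c')" by (cases w) auto
  have "of_rat (a - a') + of_rat (b - b') * lam + of_rat (c - c') * lam^2 = 0"
    using h unfolding v w emb_def by (simp add: of_rat_diff algebra_simps)
  from lin_indep[OF this] show ?thesis using v w by simp
qed

lemma coords_emb: "coords (emb w) = w"
proof -
  have "(THE (a,b,c). emb w = of_rat a + of_rat b * lam + of_rat c * lam^2) = w"
  proof (rule the_equality)
    show "case w of (a,b,c) \<Rightarrow> emb w = of_rat a + of_rat b * lam + of_rat c * lam^2"
      by (cases w) (simp add: emb_def)
  next
    fix x assume "case x of (a,b,c) \<Rightarrow> emb w = of_rat a + of_rat b * lam + of_rat c * lam^2"
    then have "emb w = emb x" by (cases x) (simp add: emb_def)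
    then show "x = w" using emb_inj by metis
  qed
  then show ?thesis unfolding coords_def .
qed


lemma card1_pos:
  fixes d :: int and c :: rat assumes d: "d > 0"
  shows "{x::rat. 0 \<le> x \<and> x < 1 \<and> of_int d * x + c \<in> \<int>} =
         (\<lambda>k. (of_int k - c) / of_int d) ` {\<lceil>c\<rceil> ..< \<lceil>c\<rceil> + d}"
proof (intro set_eqI iffI)
  fix x assume "x \<in> {x::rat. 0 \<le> x \<and> x < 1 \<and> of_int d * x + c \<in> \<int>}"
  then have x0: "0 \<le> x" and x1: "x < 1" and xi: "of_int d * x + c \<in> \<int>" by auto
  then obtain k where k: "of_int d * x + c = of_int k" by (auto elim: Ints_cases)
  have dd: "(of_int d :: rat) > 0" using d by simp
  have xk: "x = (of_int k - c) / of_int d" using k dd by (simp add: field_simps)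
  have "of_int d * x \<ge> 0" using x0 dd by simp
  then have "c \<le> of_int k" using k by linarith
  then have "\<lceil>c\<rceil> \<le> k" by (simp add: ceiling_le_iff)
  moreover have "of_int k < c + of_int d" using k x1 dd
    by (metis add.commute add_less_cancel_left mult.right_neutral mult_strict_left_mono)
  then have "of_int (k - d) < c" by simp
  then have "k - d < \<lceil>c\<rceil>" by (simp add: less_ceiling_iff)
  ultimately show "x \<in> (\<lambda>k. (of_int k - c) / of_int d) ` {\<lceil>c\<rceil> ..< \<lceil>c\<rceil> + d}"
    using xk by auto
next
  fix x assume "x \<in> (\<lambda>k. (of_int k - c) / of_int d) ` {\<lceil>c\<rceil> ..< \<lceil>c\<rceil> + d}"
  then obtain k where k1: "\<lceil>c\<rceil> \<le> k" and k2: "k < \<lceil>c\<rceil> + d" and xk: "x = (of_int k - c) / of_int d" by auto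
  have dd: "(of_int d :: rat) > 0" using d by simp
  have "c \<le> of_int k" using k1 by (simp add: ceiling_le_iff)
  then have "0 \<le> x" using xk dd by simp
  moreover have "k - d < \<lceil>c\<rceil>" using k2 by simp
  then have "of_int (k - d) < c" by (simp add: less_ceiling_iff)
  then have "x < 1" using xk dd by (simp add: divide_less_eq)
  moreover have "of_int d * x + c = of_int k" using xk dd by simp
  ultimately show "x \<in> {x::rat. 0 \<le> x \<and> x < 1 \<and> of_int d * x + c \<in> \<int>}" by auto
qed

lemma card1:
  fixes d :: int and c :: rat assumes d: "d \<noteq> 0"
  shows "card {x::rat. 0 \<le> x \<and> x < 1 \<and> of_int d * x + c \<in> \<int>} = nat \<bar>d\<bar>"
proof -
  have main: "card {x::rat. 0 \<le> x \<and> x < 1 \<and> of_int d * x + c \<in> \<int>} = nat d" if d: "d > 0" for d c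
  proof -
    have "inj_on (\<lambda>k. (of_int k - c) / (of_int d :: rat)) {\<lceil>c\<rceil> ..< \<lceil>c\<rceil> + d}"
      using d by (intro inj_onI) (simp add: divide_cancel_right)
    then show ?thesis unfolding card1_pos[OF d] by (simp add: card_image)
  qed
  show ?thesis
  proof (cases "d > 0")
    case True then show ?thesis using main by simp
  next
    case False
    then have "-d > 0" using d by simp
    have eqset: "{x::rat. 0 \<le> x \<and> x < 1 \<and> of_int d * x + c \<in> \<int>} = {x::rat. 0 \<le> x \<and> x < 1 \<and> of_int (-d) * x + (-c) \<in> \<int>}"
    proof -
      have "of_int d * x + c \<in> \<int> \<longleftrightarrow> of_int (-d) * x + (-c) \<in> \<int>" for x :: rat
        by (metis add.inverse_distrib_swap minus_in_Ints_iff minus_mult_left of_int_minus add.commute)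
      then show ?thesis by auto
    qed
    have c2: "card {x::rat. 0 \<le> x \<and> x < 1 \<and> of_int (-d) * x + (-c) \<in> \<int>} = nat (-d)"
      by (rule main) fact
    show ?thesis unfolding eqset c2 using False by simp
  qed
qed


type_synonym ivec = "int \<times> int \<times> int"
type_synonym qvec = "rat \<times> rat \<times> rat"

fun dot :: "ivec \<Rightarrow> qvec \<Rightarrow> rat" where
  "dot (a,b,c) (x,y,z) = of_int a * x + of_int b * y + of_int c * z"

fun lc :: "int \<Rightarrow> ivec \<Rightarrow> int \<Rightarrow> ivec \<Rightarrow> ivec" where
  "lc u (a,b,c) v (a',b',c') = (u*a + v*a', u*b + v*b', u*c + v*c')"

fun det3 :: "ivec \<Rightarrow> ivec \<Rightarrow> ivec \<Rightarrow> int" where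
  "det3 (a1,a2,a3) (b1,b2,b3) (c1,c2,c3) =
     a1*(b2*c3 - b3*c2) - a2*(b1*c3 - b3*c1) + a3*(b1*c2 - b2*c1)"

fun inbox :: "qvec \<Rightarrow> bool" where
  "inbox (x,y,z) = (0 \<le> x \<and> x < 1 \<and> 0 \<le> y \<and> y < 1 \<and> 0 \<le> z \<and> z < 1)"

definition Sset :: "ivec \<Rightarrow> ivec \<Rightarrow> ivec \<Rightarrow> qvec set" where
  "Sset r1 r2 r3 = {w. inbox w \<and> dot r1 w \<in> \<int> \<and> dot r2 w \<in> \<int> \<and> dot r3 w \<in> \<int>}"

lemma dot_lc: "dot (lc u r v s) w = of_int u * dot r w + of_int v * dot s w"
  by (cases r; cases s; cases w) (simp add: algebra_simps)

lemma fst_lc: "fst (lc u r v s) = u * fst r + v * fst s"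
  by (cases r; cases s) simp

lemma fst_snd_lc: "fst (snd (lc u r v s)) = u * fst (snd r) + v * fst (snd s)"
  by (cases r; cases s) simp

lemma det3_lc: "det3 (lc u r1 v r2) (lc s r1 t r2) r3 = (u*t - v*s) * det3 r1 r2 r3"
  by (cases r1; cases r2; cases r3) (simp add: algebra_simps)

lemma det3_swap12: "det3 r2 r1 r3 = - det3 r1 r2 r3"
  by (cases r1; cases r2; cases r3) (simp add: algebra_simps)

lemma det3_swap23: "det3 r1 r3 r2 = - det3 r1 r2 r3"
  by (cases r1; cases r2; cases r3) (simp add: algebra_simps)

lemma Sset_swap12: "Sset r2 r1 r3 = Sset r1 r2 r3" unfolding Sset_def by auto
lemma Sset_swap23: "Sset r1 r3 r2 = Sset r1 r2 r3" unfolding Sset_def by auto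

lemma Ints_comb: "x \<in> \<int> \<Longrightarrow> y \<in> \<int> \<Longrightarrow> of_int u * x + of_int v * y \<in> (\<int> :: rat set)"
  by (intro Ints_add Ints_mult) auto

lemma inv_comb1:
  assumes "u*t - v*s = (1::int)"
  shows "of_int t * (of_int u * A + of_int v * B) + of_int (-v) * (of_int s * A + of_int t * B) = (A::rat)"
proof -
  have "of_int t * (of_int u * A + of_int v * B) + of_int (-v) * (of_int s * A + of_int t * B) = of_int (u*t - v*s) * A"
    by (simp add: algebra_simps)
  then show ?thesis using assms by simp
qed

lemma inv_comb2:
  assumes "u*t - v*s = (1::int)"
  shows "of_int (-s) * (of_int u * A + of_int v * B) + of_int u * (of_int s * A + of_int t * B) = (B::rat)"
proof -
  have "of_int (-s) * (of_int u * A + of_int v * B) + of_int u * (of_int s * A + of_int t * B) = of_int (u*t - v*s) * B"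
    by (simp add: algebra_simps)
  then show ?thesis using assms by simp
qed

lemma rowop:
  assumes h: "u*t - v*s = 1"
  shows "Sset (lc u r1 v r2) (lc s r1 t r2) r3 = Sset r1 r2 r3"
proof (intro set_eqI iffI)
  fix w assume "w \<in> Sset r1 r2 r3"
  then show "w \<in> Sset (lc u r1 v r2) (lc s r1 t r2) r3"
    unfolding Sset_def by (auto simp: dot_lc intro!: Ints_comb)
next
  fix w assume w: "w \<in> Sset (lc u r1 v r2) (lc s r1 t r2) r3"
  have "dot r1 w = of_int t * dot (lc u r1 v r2) w + of_int (-v) * dot (lc s r1 t r2) w"
    unfolding dot_lc using inv_comb1[OF h] by simp
  moreover have "dot r2 w = of_int (-s) * dot (lc u r1 v r2) w + of_int u * dot (lc s r1 t r2) w"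
    unfolding dot_lc using inv_comb2[OF h] by simp
  ultimately show "w \<in> Sset r1 r2 r3" using w unfolding Sset_def by (auto intro!: Ints_comb)
qed

lemma elim2: "\<exists>u v s t. u*t - v*s = 1 \<and> s*a + t*b = (0::int)"
proof (cases "gcd a b = 0")
  case True
  then show ?thesis by (intro exI[of _ 1] exI[of _ 0] exI[of _ 0] exI[of _ 1]) simp
next
  case False
  obtain u v where uv: "u * a + v * b = gcd a b" using bezout_int by blast
  define g where "g = gcd a b"
  obtain a' where a': "a = g * a'" using gcd_dvd1[of a b] unfolding g_def dvd_def by blast
  obtain b' where b': "b = g * b'" using gcd_dvd2[of a b] unfolding g_def dvd_def by blast
  have g0: "g \<noteq> 0" using False g_def by simp
  have "g * (u * a' + v * b') = u * (g * a') + v * (g * b')" by (simp only: algebra_simps)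
  also have "\<dots> = g" using uv unfolding g_def[symmetric] a'[symmetric] b'[symmetric] .
  finally have "g * (u * a' + v * b') = g * 1" by simp
  then have e: "u * a' + v * b' = 1" using mult_left_cancel[OF g0] by blast
  have e2: "(- b') * a + a' * b = 0" unfolding a' b' by (simp only: algebra_simps) simp
  have e1: "u * a' - v * (- b') = 1" using e by simp
  show ?thesis using e1 e2 by blast
qed

lemma triang:
  "\<exists>r1' r2' r3'. Sset r1 r2 r3 = Sset r1' r2' r3' \<and> \<bar>det3 r1 r2 r3\<bar> = \<bar>det3 r1' r2' r3'\<bar>
     \<and> fst r2' = 0 \<and> fst r3' = 0 \<and> fst (snd r3') = 0"
proof -
  obtain u v s t where e1: "u*t - v*s = 1" "s * fst r1 + t * fst r2 = 0" using elim2 by blast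
  define A1 where "A1 = lc u r1 v r2"
  define A2 where "A2 = lc s r1 t r2"
  have SA: "Sset A1 A2 r3 = Sset r1 r2 r3" unfolding A1_def A2_def by (rule rowop[OF e1(1)])
  have DA: "det3 A1 A2 r3 = det3 r1 r2 r3" unfolding A1_def A2_def det3_lc e1(1) by simp
  have fA2: "fst A2 = 0" unfolding A2_def fst_lc using e1(2) by simp
  obtain u' v' s' t' where e2: "u'*t' - v'*s' = 1" "s' * fst A1 + t' * fst r3 = 0" using elim2 by blast
  define B1 where "B1 = lc u' A1 v' r3"
  define B3 where "B3 = lc s' A1 t' r3"
  have SB: "Sset B1 B3 A2 = Sset A1 r3 A2" unfolding B1_def B3_def by (rule rowop[OF e2(1)])
  have DB: "det3 B1 B3 A2 = det3 A1 r3 A2" unfolding B1_def B3_def det3_lc e2(1) by simp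
  have fB3: "fst B3 = 0" unfolding B3_def fst_lc using e2(2) by simp
  obtain u'' v'' s'' t'' where e3: "u''*t'' - v''*s'' = 1" "s'' * fst (snd A2) + t'' * fst (snd B3) = 0" using elim2 by blast
  define C2 where "C2 = lc u'' A2 v'' B3"
  define C3 where "C3 = lc s'' A2 t'' B3"
  have SC: "Sset C2 C3 B1 = Sset A2 B3 B1" unfolding C2_def C3_def by (rule rowop[OF e3(1)])
  have DC: "det3 C2 C3 B1 = det3 A2 B3 B1" unfolding C2_def C3_def det3_lc e3(1) by simp
  have fC: "fst C2 = 0" "fst C3 = 0" "fst (snd C3) = 0"
    unfolding C2_def C3_def fst_lc fst_snd_lc using fA2 fB3 e3(2) by simp_all
  have "Sset r1 r2 r3 = Sset A1 A2 r3" using SA by simp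
  also have "\<dots> = Sset A1 r3 A2" by (rule Sset_swap23[symmetric])
  also have "\<dots> = Sset B1 B3 A2" using SB by simp
  also have "\<dots> = Sset B1 A2 B3" by (rule Sset_swap23[symmetric])
  also have "\<dots> = Sset A2 B1 B3" by (rule Sset_swap12[symmetric])
  also have "\<dots> = Sset A2 B3 B1" by (rule Sset_swap23[symmetric])
  also have "\<dots> = Sset C2 C3 B1" using SC by simp
  also have "\<dots> = Sset C2 B1 C3" by (rule Sset_swap23[symmetric])
  also have "\<dots> = Sset B1 C2 C3" by (rule Sset_swap12[symmetric])
  finally have S: "Sset r1 r2 r3 = Sset B1 C2 C3" .
  have "\<bar>det3 r1 r2 r3\<bar> = \<bar>det3 A1 A2 r3\<bar>" using DA by simp
  also have "\<dots> = \<bar>det3 A1 r3 A2\<bar>" using det3_swap23[of A1 A2 r3] by simp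
  also have "\<dots> = \<bar>det3 B1 B3 A2\<bar>" using DB by simp
  also have "\<dots> = \<bar>det3 B1 A2 B3\<bar>" using det3_swap23[of B1 B3 A2] by simp
  also have "\<dots> = \<bar>det3 A2 B1 B3\<bar>" using det3_swap12[of B1 A2 B3] by simp
  also have "\<dots> = \<bar>det3 A2 B3 B1\<bar>" using det3_swap23[of A2 B1 B3] by simp
  also have "\<dots> = \<bar>det3 C2 C3 B1\<bar>" using DC by simp
  also have "\<dots> = \<bar>det3 C2 B1 C3\<bar>" using det3_swap23[of C2 C3 B1] by simp
  also have "\<dots> = \<bar>det3 B1 C2 C3\<bar>" using det3_swap12[of C2 B1 C3] by simp
  finally have "\<bar>det3 r1 r2 r3\<bar> = \<bar>det3 B1 C2 C3\<bar>" .
  moreover note S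
  ultimately show ?thesis using fC S by blast
qed


lemma tri_count:
  assumes nz: "a * d * f \<noteq> 0"
  shows "finite (Sset (a,b,c) (0,d,e) (0,0,f)) \<and> card (Sset (a,b,c) (0,d,e) (0,0,f)) = nat \<bar>a * d * f\<bar>"
proof -
  have a0: "a \<noteq> 0" and d0: "d \<noteq> 0" and f0: "f \<noteq> 0" using nz by auto
  define A3 where "A3 = {z::rat. 0 \<le> z \<and> z < 1 \<and> of_int f * z + 0 \<in> \<int>}"
  define A2 where "A2 = (\<lambda>z. {y::rat. 0 \<le> y \<and> y < 1 \<and> of_int d * y + of_int e * z \<in> \<int>})"
  define A1 where "A1 = (\<lambda>(z,y). {x::rat. 0 \<le> x \<and> x < 1 \<and> of_int a * x + (of_int b * y + of_int c * z) \<in> \<int>})"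
  have c3: "card A3 = nat \<bar>f\<bar>" unfolding A3_def by (rule card1[OF f0])
  have c2: "card (A2 z) = nat \<bar>d\<bar>" for z unfolding A2_def by (rule card1[OF d0])
  have c1: "card (A1 zy) = nat \<bar>a\<bar>" for zy unfolding A1_def by (cases zy) (simp add: card1[OF a0])
  have f3: "finite A3" using c3 f0 by (intro card_ge_0_finite) simp
  have f2: "finite (A2 z)" for z using c2[of z] d0 by (intro card_ge_0_finite) simp
  have f1: "finite (A1 zy)" for zy using c1[of zy] a0 by (intro card_ge_0_finite) simp
  define T where "T = (SIGMA z:A3. SIGMA y:A2 z. A1 (z,y))"
  have fT: "finite T" unfolding T_def using f1 f2 f3 by (intro finite_SigmaI) auto
  have cT: "card T = nat \<bar>f\<bar> * (nat \<bar>d\<bar> * nat \<bar>a\<bar>)"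
  proof -
    have "card T = (\<Sum>z\<in>A3. card (SIGMA y:A2 z. A1 (z,y)))"
      unfolding T_def using f3 f2 f1 by (intro card_SigmaI) (auto intro: finite_SigmaI)
    also have "\<dots> = (\<Sum>z\<in>A3. (\<Sum>y\<in>A2 z. card (A1 (z,y))))"
      using f2 f1 by (intro sum.cong refl card_SigmaI) auto
    also have "\<dots> = (\<Sum>z\<in>A3. nat \<bar>d\<bar> * nat \<bar>a\<bar>)" by (simp add: c1 c2)
    also have "\<dots> = nat \<bar>f\<bar> * (nat \<bar>d\<bar> * nat \<bar>a\<bar>)" by (simp add: c3)
    finally show ?thesis .
  qed
  define g where "g = (\<lambda>(z::rat,y::rat,x::rat). (x,y,z))"
  have inj: "inj_on g T" unfolding g_def by (intro inj_onI) auto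
  have eq: "Sset (a,b,c) (0,d,e) (0,0,f) = g ` T"
  proof (intro set_eqI iffI)
    fix w assume "w \<in> Sset (a,b,c) (0,d,e) (0,0,f)"
    then obtain x y z where w: "w = (x,y,z)" and h: "inbox (x,y,z)" "dot (a,b,c) (x,y,z) \<in> \<int>"
      "dot (0,d,e) (x,y,z) \<in> \<int>" "dot (0,0,f) (x,y,z) \<in> \<int>" unfolding Sset_def by (cases w) auto
    have "(z,y,x) \<in> T" using h unfolding T_def A1_def A2_def A3_def by (simp add: add.assoc)
    then show "w \<in> g ` T" unfolding w g_def by force
  next
    fix w assume "w \<in> g ` T"
    then obtain x y z where w: "w = (x,y,z)" and "(z,y,x) \<in> T" unfolding g_def by auto
    then show "w \<in> Sset (a,b,c) (0,d,e) (0,0,f)"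
      unfolding T_def A1_def A2_def A3_def Sset_def by (simp add: add.assoc)
  qed
  show ?thesis unfolding eq using fT inj cT card_image[OF inj]
    by (simp add: abs_mult nat_mult_distrib)
qed

lemma Sset_count:
  assumes "det3 r1 r2 r3 \<noteq> 0"
  shows "finite (Sset r1 r2 r3) \<and> card (Sset r1 r2 r3) = nat \<bar>det3 r1 r2 r3\<bar>"
proof -
  obtain r1' r2' r3' where t: "Sset r1 r2 r3 = Sset r1' r2' r3'" "\<bar>det3 r1 r2 r3\<bar> = \<bar>det3 r1' r2' r3'\<bar>"
     "fst r2' = 0" "fst r3' = 0" "fst (snd r3') = 0" using triang by blast
  obtain a b c where r1: "r1' = (a,b,c)" by (cases r1') auto
  obtain d e where r2: "r2' = (0,d,e)" using t(3) by (cases r2') auto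
  obtain f where r3: "r3' = (0,0,f)" using t(4,5) by (cases r3') auto
  have dd: "det3 r1' r2' r3' = a * d * f" unfolding r1 r2 r3 by simp
  have "a * d * f \<noteq> 0" using assms t(2) dd by auto
  from tri_count[OF this] show ?thesis unfolding t(1) t(2) r1 r2 r3 by simp
qed


lemma cubic_mul_id: "L^3 = 1 - L - L^2 \<Longrightarrow> (A*x + C*y + (B-C)*z) + (B*x + (A-C)*y + (2*C-B)*z)*L + (C*x + (B-C)*y + (A-B)*z)*L^2 = (A + B*L + C*L^2)*(x + y*L + (z::real)*L^2)"
  by algebra

definition rw1 :: "int \<Rightarrow> int \<Rightarrow> int \<Rightarrow> ivec" where "rw1 a b c = (a, c, b - c)"
definition rw2 :: "int \<Rightarrow> int \<Rightarrow> int \<Rightarrow> ivec" where "rw2 a b c = (b, a - c, 2*c - b)"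
definition rw3 :: "int \<Rightarrow> int \<Rightarrow> int \<Rightarrow> ivec" where "rw3 a b c = (c, b - c, a - b)"

definition embi :: "int \<Rightarrow> int \<Rightarrow> int \<Rightarrow> real" where
  "embi a b c = of_int a + of_int b * lam + of_int c * lam^2"

lemma emb_mul:
  "emb (dot (rw1 a b c) w, dot (rw2 a b c) w, dot (rw3 a b c) w) = embi a b c * emb w"
proof -
  obtain x y z where w: "w = (x,y,z)" by (cases w) auto
  show ?thesis unfolding w rw1_def rw2_def rw3_def embi_def emb_def
    using cubic_mul_id[OF lam3, of "of_int a" "of_rat x" "of_int c" "of_rat y" "of_int b" "of_rat z"]
    by (simp add: of_rat_add of_rat_mult of_rat_diff algebra_simps)
qed

lemma emb_of_int: "emb (of_int k1, of_int k2, of_int k3) = embi k1 k2 k3"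
  by (simp add: emb_def embi_def)

lemma cramer:
  fixes a1 a2 a3 b1 b2 b3 c1 c2 c3 :: int and k1 k2 k3 :: rat
  assumes D: "det3 (a1,a2,a3) (b1,b2,b3) (c1,c2,c3) \<noteq> 0"
  shows "\<exists>y. dot (a1,a2,a3) y = k1 \<and> dot (b1,b2,b3) y = k2 \<and> dot (c1,c2,c3) y = k3"
proof -
  define D where "D = (of_int (det3 (a1,a2,a3) (b1,b2,b3) (c1,c2,c3)) :: rat)"
  have D0: "D \<noteq> 0" using assms unfolding D_def by (simp only: of_int_eq_0_iff not_False_eq_True)
  define Y1 where "Y1 = of_int (b2*c3-b3*c2) * k1 + of_int (a3*c2-a2*c3) * k2 + of_int (a2*b3-a3*b2) * k3"
  define Y2 where "Y2 = of_int (b3*c1-b1*c3) * k1 + of_int (a1*c3-a3*c1) * k2 + of_int (a3*b1-a1*b3) * k3"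
  define Y3 where "Y3 = of_int (b1*c2-b2*c1) * k1 + of_int (a2*c1-a1*c2) * k2 + of_int (a1*b2-a2*b1) * k3"
  have e1: "of_int a1 * Y1 + of_int a2 * Y2 + of_int a3 * Y3 = D * k1"
    unfolding Y1_def Y2_def Y3_def D_def by (simp add: algebra_simps)
  have e2: "of_int b1 * Y1 + of_int b2 * Y2 + of_int b3 * Y3 = D * k2"
    unfolding Y1_def Y2_def Y3_def D_def by (simp add: algebra_simps)
  have e3: "of_int c1 * Y1 + of_int c2 * Y2 + of_int c3 * Y3 = D * k3"
    unfolding Y1_def Y2_def Y3_def D_def by (simp add: algebra_simps)
  have "dot (a1,a2,a3) (Y1/D, Y2/D, Y3/D) = k1"
  proof -
    have "dot (a1,a2,a3) (Y1/D, Y2/D, Y3/D) = (of_int a1 * Y1 + of_int a2 * Y2 + of_int a3 * Y3) / D"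
      by (simp add: add_divide_distrib)
    then show ?thesis using e1 D0 by simp
  qed
  moreover have "dot (b1,b2,b3) (Y1/D, Y2/D, Y3/D) = k2"
  proof -
    have "dot (b1,b2,b3) (Y1/D, Y2/D, Y3/D) = (of_int b1 * Y1 + of_int b2 * Y2 + of_int b3 * Y3) / D"
      by (simp add: add_divide_distrib)
    then show ?thesis using e2 D0 by simp
  qed
  moreover have "dot (c1,c2,c3) (Y1/D, Y2/D, Y3/D) = k3"
  proof -
    have "dot (c1,c2,c3) (Y1/D, Y2/D, Y3/D) = (of_int c1 * Y1 + of_int c2 * Y2 + of_int c3 * Y3) / D"
      by (simp add: add_divide_distrib)
    then show ?thesis using e3 D0 by simp
  qed
  ultimately show ?thesis by blast
qed

lemma cramer_gen:
  assumes "det3 r1 r2 r3 \<noteq> 0"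
  shows "\<exists>y. dot r1 y = k1 \<and> dot r2 y = k2 \<and> dot r3 y = k3"
  using assms cramer by (cases r1; cases r2; cases r3) auto

lemma adj_col:
  "\<exists>z1 z2 z3. dot r1 (of_int z1, of_int z2, of_int z3) = of_int (det3 r1 r2 r3)
     \<and> dot r2 (of_int z1, of_int z2, of_int z3) = 0 \<and> dot r3 (of_int z1, of_int z2, of_int z3) = 0"
proof -
  obtain a1 a2 a3 where r1: "r1 = (a1,a2,a3)" by (cases r1) auto
  obtain b1 b2 b3 where r2: "r2 = (b1,b2,b3)" by (cases r2) auto
  obtain c1 c2 c3 where r3: "r3 = (c1,c2,c3)" by (cases r3) auto
  show ?thesis unfolding r1 r2 r3
    apply (rule exI[of _ "b2*c3-b3*c2"], rule exI[of _ "b3*c1-b1*c3"], rule exI[of _ "b1*c2-b2*c1"])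
    apply (simp add: algebra_simps)
    done
qed

definition fracv :: "qvec \<Rightarrow> qvec" where
  "fracv w = (case w of (x,y,z) \<Rightarrow> (frac x, frac y, frac z))"

lemma dot_fracv: "dot r w \<in> \<int> \<Longrightarrow> dot r (fracv w) \<in> \<int>"
proof -
  assume h: "dot r w \<in> \<int>"
  obtain p q s where r: "r = (p,q,s)" by (cases r) auto
  obtain x y z where w: "w = (x,y,z)" by (cases w) auto
  have "dot r (fracv w) = dot r w - of_int (p * \<lfloor>x\<rfloor> + q * \<lfloor>y\<rfloor> + s * \<lfloor>z\<rfloor>)"
    unfolding r w fracv_def by (simp add: frac_def algebra_simps)
  then show ?thesis using h by simp
qed

lemma inbox_fracv: "inbox (fracv w)"
  by (cases w) (simp add: fracv_def frac_lt_1)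

lemma fracv_id: "inbox w \<Longrightarrow> fracv w = w"
  by (cases w) (simp add: fracv_def frac_eq)

lemma Pi_f_emb: "Pi_f (emb w) = emb (fracv w)"
  by (cases w) (simp only: Pi_f_def coords_emb, simp add: fracv_def emb_def)

lemma Zlam_embi: "Zlam = {embi a b c | a b c. True}"
  unfolding Zlam_def embi_def by simp

lemma I_char:
  assumes D: "det3 (rw1 a b c) (rw2 a b c) (rw3 a b c) \<noteq> 0" and B: "embi a b c \<noteq> 0"
  shows "Pi_f ` ((\<lambda>z. z / embi a b c) ` Zlam) = emb ` Sset (rw1 a b c) (rw2 a b c) (rw3 a b c)"
proof (intro set_eqI iffI)
  fix x assume "x \<in> Pi_f ` ((\<lambda>z. z / embi a b c) ` Zlam)"
  then obtain k1 k2 k3 where x: "x = Pi_f (embi k1 k2 k3 / embi a b c)" unfolding Zlam_embi by auto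
  obtain y where y: "dot (rw1 a b c) y = of_int k1" "dot (rw2 a b c) y = of_int k2" "dot (rw3 a b c) y = of_int k3"
    using cramer_gen[OF D] by blast
  have "embi k1 k2 k3 = embi a b c * emb y" using emb_mul[of a b c y] unfolding y emb_of_int .
  then have "embi k1 k2 k3 / embi a b c = emb y" using B by simp
  then have x2: "x = emb (fracv y)" unfolding x using Pi_f_emb by simp
  have "fracv y \<in> Sset (rw1 a b c) (rw2 a b c) (rw3 a b c)"
    unfolding Sset_def using inbox_fracv dot_fracv y by auto
  then show "x \<in> emb ` Sset (rw1 a b c) (rw2 a b c) (rw3 a b c)" using x2 by blast
next
  fix x assume "x \<in> emb ` Sset (rw1 a b c) (rw2 a b c) (rw3 a b c)"
  then obtain w where x: "x = emb w" and w: "w \<in> Sset (rw1 a b c) (rw2 a b c) (rw3 a b c)" by blast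
  obtain k1 where k1: "dot (rw1 a b c) w = of_int k1" using w unfolding Sset_def by (auto elim: Ints_cases)
  obtain k2 where k2: "dot (rw2 a b c) w = of_int k2" using w unfolding Sset_def by (auto elim: Ints_cases)
  obtain k3 where k3: "dot (rw3 a b c) w = of_int k3" using w unfolding Sset_def by (auto elim: Ints_cases)
  have "embi k1 k2 k3 = embi a b c * emb w" using emb_mul[of a b c w] unfolding k1 k2 k3 emb_of_int .
  then have "embi k1 k2 k3 / embi a b c = emb w" using B by simp
  moreover have "Pi_f (emb w) = emb w" unfolding Pi_f_emb using w fracv_id unfolding Sset_def by simp
  ultimately have "x = Pi_f (embi k1 k2 k3 / embi a b c)" using x by simp
  moreover have "embi k1 k2 k3 \<in> Zlam" unfolding Zlam_embi by blast
  ultimately show "x \<in> Pi_f ` ((\<lambda>z. z / embi a b c) ` Zlam)" by blast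
qed

lemma I_card:
  assumes D: "det3 (rw1 a b c) (rw2 a b c) (rw3 a b c) \<noteq> 0" and B: "embi a b c \<noteq> 0"
  shows "finite (Pi_f ` ((\<lambda>z. z / embi a b c) ` Zlam)) \<and>
    card (Pi_f ` ((\<lambda>z. z / embi a b c) ` Zlam)) = nat \<bar>det3 (rw1 a b c) (rw2 a b c) (rw3 a b c)\<bar>"
proof -
  have inj: "inj_on emb S" for S using emb_inj by (intro inj_onI) blast
  show ?thesis unfolding I_char[OF D B] using Sset_count[OF D] card_image[OF inj] by simp
qed


fun pw :: "nat \<Rightarrow> int \<times> int \<times> int" where
  "pw 0 = (1, 0, 0)"
| "pw (Suc k) = (case pw k of (a,b,c) \<Rightarrow> (c, a - c, b - c))"

lemma pw_eval:
  fixes y :: "'a::comm_ring_1"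
  assumes y3: "y^3 = 1 - y - y^2"
  shows "pw k = (a,b,c) \<Longrightarrow> y^k = of_int a + of_int b * y + of_int c * y^2"
proof (induction k arbitrary: a b c)
  case 0 then show ?case by simp
next
  case (Suc k)
  obtain a' b' c' where p: "pw k = (a',b',c')" by (cases "pw k") auto
  then have abc: "a = c'" "b = a' - c'" "c = b' - c'" using Suc.prems by auto
  have "y^Suc k = y * (of_int a' + of_int b' * y + of_int c' * y^2)" using Suc.IH[OF p] by simp
  also have "\<dots> = of_int a' * y + of_int b' * y^2 + of_int c' * y^3"
    by (simp add: algebra_simps power2_eq_square power3_eq_cube)
  also have "\<dots> = of_int c' + of_int (a' - c') * y + of_int (b' - c') * y^2"
    unfolding y3 by (simp add: algebra_simps)
  finally show ?case unfolding abc .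
qed

lemma det_vieta:
  fixes x y z :: complex
  assumes "x + y + z = -1" "x*y + x*z + y*z = 1" "x*y*z = 1"
  shows "(of_int A + of_int B*x + of_int C*x^2) * (of_int A + of_int B*y + of_int C*y^2) * (of_int A + of_int B*z + of_int C*z^2)
     = of_int (det3 (rw1 A B C) (rw2 A B C) (rw3 A B C))"
proof -
  have "(of_int A + of_int B*x + of_int C*x^2) * (of_int A + of_int B*y + of_int C*y^2) * (of_int A + of_int B*z + (of_int C::complex)*z^2) =
    of_int A*((of_int A-of_int C)*(of_int A-of_int B) - (2*of_int C-of_int B)*(of_int B-of_int C)) - of_int C*(of_int B*(of_int A-of_int B) - (2*of_int C-of_int B)*of_int C) + (of_int B-of_int C)*(of_int B*(of_int B-of_int C) - (of_int A-of_int C)*of_int C)"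
    using assms by algebra
  then show ?thesis unfolding rw1_def rw2_def rw3_def by simp
qed

definition sq :: real where "sq = sqrt (3*lam^2 + 2*lam + 3)"
definition al :: complex where "al = Complex (-(1+lam)/2) (sq/2)"

lemma sq_pos: "sq > 0"
proof -
  have "0 < 3*lam^2 + 2*lam + 3" using lam_bounds zero_le_power2[of lam] by linarith
  then show ?thesis unfolding sq_def by simp
qed

lemma sq_sq: "sq^2 = 3*lam^2 + 2*lam + 3"
proof -
  have "0 \<le> 3*lam^2 + 2*lam + 3" using lam_bounds zero_le_power2[of lam] by linarith
  then show ?thesis unfolding sq_def by simp
qed

lemma lamrel: "lam * (1 + lam + lam^2) = 1"
  using lam_root by (simp add: algebra_simps power2_eq_square power3_eq_cube)

lemma al_sum: "al + cnj al = - (1 + of_real lam)"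
  unfolding al_def by (simp add: complex_eq_iff)

lemma al_prod: "al * cnj al = 1 + of_real lam + (of_real lam)^2"
  unfolding al_def using sq_sq by (simp add: complex_eq_iff power2_eq_square field_simps)

lemma cubic_factor:
  fixes x :: complex
  shows "x^3 + x^2 + x - 1 = (x - of_real lam) * (x - al) * (x - cnj al)"
proof -
  define L where "L = (of_real lam :: complex)"
  have s: "al + cnj al = - (1 + L)" and p: "al * cnj al = 1 + L + L^2" using al_sum al_prod L_def by auto
  have l: "L * (1 + L + L^2) = 1" unfolding L_def using lamrel
    by (metis of_real_1 of_real_add of_real_mult of_real_power)
  have "(x - L) * (x - al) * (x - cnj al) = (x - L) * (x^2 - (al + cnj al) * x + al * cnj al)"
    by (simp add: algebra_simps power2_eq_square)
  also have "\<dots> = (x - L) * (x^2 + (1 + L) * x + (1 + L + L^2))" unfolding s p by (simp add: algebra_simps)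
  also have "\<dots> = x^3 + x^2 + x - L * (1 + L + L^2)"
    by (simp add: algebra_simps power2_eq_square power3_eq_cube)
  finally have e: "(x - L) * (x - al) * (x - cnj al) = x^3 + x^2 + x - L * (1 + L + L^2)" .
  show ?thesis unfolding e l L_def[symmetric] ..
qed

lemma roots_eq: "{x::complex. x^3 + x^2 + x - 1 = 0} = {of_real lam, al, cnj al}"
  unfolding cubic_factor by auto

lemma roots_distinct: "of_real lam \<noteq> al" "of_real lam \<noteq> cnj al" "al \<noteq> cnj al"
  using sq_pos unfolding al_def by (auto simp: complex_eq_iff)

lemma prod_roots:
  "(\<Prod>x\<in>{x::complex. x^3 + x^2 + x - 1 = 0}. f x) = f (of_real lam) * f al * f (cnj al)"
  unfolding roots_eq using roots_distinct by (simp add: mult.assoc)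

lemma root3: "x \<in> {x::complex. x^3 + x^2 + x - 1 = 0} \<Longrightarrow> x^3 = 1 - x - x^2"
  by (simp add: algebra_simps)


lemma omega_pos: "0 < omega" and omega_lt1: "omega < 1"
  unfolding omega_def using lam_bounds by (simp, simp add: power_less_one_iff)

lemma vieta:
  "of_real lam + al + cnj al = -1"
  "of_real lam * al + of_real lam * cnj al + al * cnj al = 1"
  "of_real lam * al * cnj al = 1"
proof -
  define L where "L = (of_real lam :: complex)"
  have s: "al + cnj al = - (1 + L)" and p: "al * cnj al = 1 + L + L^2" using al_sum al_prod L_def by auto
  have "L * (1 + L + L^2) = of_real (lam * (1 + lam + lam^2))" unfolding L_def by simp
  then have l: "L * (1 + L + L^2) = 1" using lamrel by simp
  show "of_real lam + al + cnj al = -1" using s unfolding L_def[symmetric] by (simp add: algebra_simps)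
  have "L * al + L * cnj al + al * cnj al = L * (al + cnj al) + al * cnj al" by (simp add: algebra_simps)
  also have "\<dots> = 1" unfolding s p by (simp add: algebra_simps power2_eq_square)
  finally show "of_real lam * al + of_real lam * cnj al + al * cnj al = 1" unfolding L_def .
  have "L * al * cnj al = L * (al * cnj al)" by (simp add: algebra_simps)
  also have "\<dots> = 1" unfolding p l ..
  finally show "of_real lam * al * cnj al = 1" unfolding L_def .
qed

lemma z_re: "2 * Re (al^3) = 5 - omega"
proof -
  define L where "L = (of_real lam :: complex)"
  have s: "al + cnj al = - (1 + L)" and p: "al * cnj al = 1 + L + L^2" using al_sum al_prod L_def by auto
  have "L^3 + L^2 + L - 1 = of_real (lam^3 + lam^2 + lam - 1)" unfolding L_def by simp
  then have l3: "L^3 + L^2 + L - 1 = 0" using lam_root by simp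
  have "al^3 + cnj al^3 = (al + cnj al)^3 - 3 * (al * cnj al) * (al + cnj al)"
    by (simp add: algebra_simps power2_eq_square power3_eq_cube)
  also have "\<dots> = 2 + 3*L + 3*L^2 + 2*L^3" unfolding s p
    by (simp add: algebra_simps power2_eq_square power3_eq_cube)
  also have "\<dots> = 5 - L^3"
  proof -
    have "2 + 3*L + 3*L^2 + 2*L^3 - (5 - L^3) = 3 * (L^3 + L^2 + L - 1)" by (simp add: algebra_simps)
    also have "\<dots> = 0" unfolding l3 by simp
    finally show ?thesis by (simp only: right_minus_eq)
  qed
  finally have "al^3 + cnj (al^3) = of_real (5 - omega)" unfolding L_def omega_def by simp
  then have "of_real (2 * Re (al^3)) = (of_real (5 - omega) :: complex)" unfolding complex_add_cnj .
  then show ?thesis by (simp only: of_real_eq_iff)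
qed

lemma z_norm: "cmod (al^3) ^ 2 = 1 / omega"
proof -
  have "of_real (cmod (al^3) ^ 2) = al^3 * cnj (al^3)" by (rule complex_norm_square)
  also have "\<dots> = (al * cnj al)^3" by (simp add: power_mult_distrib)
  also have "\<dots> = of_real ((1 + lam + lam^2)^3)" unfolding al_prod by simp
  finally have e: "cmod (al^3) ^ 2 = (1 + lam + lam^2)^3" by (simp only: of_real_eq_iff)
  have "omega * (1 + lam + lam^2)^3 = (lam * (1 + lam + lam^2))^3" unfolding omega_def by (simp add: power_mult_distrib)
  then have "omega * (1 + lam + lam^2)^3 = 1" using lamrel by simp
  then show ?thesis unfolding e using omega_pos by (simp add: field_simps)
qed


definition rho :: real where "rho = omega powr (-1/2)"

lemma rho_pos: "rho > 0" unfolding rho_def using omega_pos by simp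

lemma rho_sq: "rho^2 = 1 / omega"
proof -
  have "rho^2 = omega powr (-1/2 + -1/2)" unfolding rho_def powr_add by (simp add: power2_eq_square)
  also have "\<dots> = inverse omega" using omega_pos by (simp add: powr_minus)
  finally show ?thesis by (simp add: field_simps)
qed

lemma rho_sqrt: "rho * sqrt omega = 1"
proof -
  have "rho * sqrt omega = omega powr (-1/2) * omega powr (1/2)"
    unfolding rho_def using omega_pos by (simp add: powr_half_sqrt)
  also have "\<dots> = omega powr (-1/2 + 1/2)" by (simp only: powr_add)
  also have "\<dots> = 1" using omega_pos by simp
  finally show ?thesis .
qed

lemma rho_gt1: "rho > 1"
proof -
  have "rho^2 > 1^2" unfolding rho_sq using omega_pos omega_lt1 by simp
  then show ?thesis using rho_pos by (smt (verit) one_power2 power_mono)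
qed

lemma norm_z: "cmod (al^3) = rho"
proof (rule power_eq_imp_eq_base[of _ 2])
  show "cmod (al^3)^2 = rho^2" by (simp only: z_norm rho_sq)
qed (use rho_pos in auto)

lemma zn:
  assumes th: "0 < \<theta>" "\<theta> < pi" and ct: "cos \<theta> = sqrt omega * (5 - omega) / 2"
  shows "Re ((al^3)^n) = rho^n * cos (real n * \<theta>) \<and> cmod ((al^3)^n) = rho^n"
proof -
  define z where "z = al^3"
  have rez: "Re z = rho * cos \<theta>"
    unfolding ct z_def using z_re rho_sqrt by (simp add: field_simps)
  have nz: "cmod z = rho" unfolding z_def by (rule norm_z)
  have s0: "sin \<theta> > 0" using th by (intro sin_gt_zero) auto
  have "(Im z)^2 = (cmod z)^2 - (Re z)^2" by (simp add: cmod_power2)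
  also have "\<dots> = rho^2 * (1 - (cos \<theta>)^2)" unfolding rez nz by (simp add: algebra_simps power2_eq_square)
  also have "\<dots> = (rho * sin \<theta>)^2" by (simp add: sin_squared_eq power_mult_distrib)
  finally have "Im z = rho * sin \<theta> \<or> Im z = - (rho * sin \<theta>)" by (simp only: power2_eq_iff)
  then obtain \<phi> where phi: "z = rcis rho \<phi>" "cos \<phi> = cos \<theta>"
  proof
    assume "Im z = rho * sin \<theta>"
    then have "z = rcis rho \<theta>" using rez by (simp add: complex_eq_iff rcis_def)
    then show ?thesis using that by blast
  next
    assume "Im z = - (rho * sin \<theta>)"
    then have "z = rcis rho (-\<theta>)" using rez by (simp add: complex_eq_iff rcis_def)
    then show ?thesis using that[of "-\<theta>"] by simp
  qed
  have "z^n = rcis (rho^n) (real n * \<phi>)" unfolding phi(1) DeMoivre2 ..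
  then have "Re (z^n) = rho^n * cos (real n * \<phi>)" by simp
  moreover have "cos (real n * \<phi>) = cos (real n * \<theta>)"
  proof -
    have "\<phi> = \<theta> \<or> \<phi> = -\<theta> \<or> (\<exists>k. True)" by simp
    show ?thesis
    proof (cases "sin \<phi> = sin \<theta>")
      case True
      then have "cis \<phi> = cis \<theta>" using phi(2) by (simp add: complex_eq_iff)
      then have "cis \<phi> ^ n = cis \<theta> ^ n" by simp
      then show ?thesis unfolding DeMoivre by (simp add: complex_eq_iff)
    next
      case False
      have "(sin \<phi>)^2 = (sin \<theta>)^2" using phi(2) by (simp add: sin_squared_eq)
      then have "sin \<phi> = - sin \<theta>" using False by (simp add: power2_eq_iff)
      then have "cis \<phi> = cis (-\<theta>)" using phi(2) by (simp add: complex_eq_iff)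
      then have "cis \<phi> ^ n = cis (-\<theta>) ^ n" by simp
      then have "cos (real n * \<phi>) = cos (real n * (-\<theta>))" unfolding DeMoivre by (simp add: complex_eq_iff)
      then show ?thesis by simp
    qed
  qed
  moreover have "cmod (z^n) = rho^n" by (simp only: norm_power nz)
  ultimately show ?thesis unfolding z_def by simp
qed

lemma cmod_one_minus_sq: "(cmod (1 - w))^2 = 1 - 2 * Re w + (cmod w)^2"
  unfolding cmod_power2 by (simp add: algebra_simps power2_eq_square)

lemma rho_pow: "rho^n = omega powr (- real n / 2)"
proof -
  have "rho^n = rho powr real n" using rho_pos by (simp add: powr_realpow)
  also have "\<dots> = omega powr (- real n / 2)" unfolding rho_def powr_powr by simp
  finally show ?thesis .
qed

lemma final_formula:
  fixes c :: real
  shows "(1 - omega^n) * (1 - 2 * rho^n * c + (rho^n)^2)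
     = omega powr (- real n) - omega ^ n - 2 * (omega powr (- real n / 2) - omega powr (real n / 2)) * c"
proof -
  define X where "X = omega powr (- real n / 2)"
  have on: "omega^n = omega powr real n" using omega_pos by (simp add: powr_realpow)
  have x2: "X^2 = omega powr (- real n)" unfolding X_def power2_eq_square powr_add[symmetric] by simp
  have ox: "omega^n * X = omega powr (real n / 2)" unfolding X_def on powr_add[symmetric] by simp
  have ox2: "omega^n * omega powr (- real n) = 1" unfolding on powr_add[symmetric] using omega_pos by simp
  have "(1 - omega^n) * (1 - 2 * X * c + X^2) = X^2 - omega^n - 2 * (X - omega^n * X) * c + (1 - omega^n * X^2)"
    by (simp add: algebra_simps power2_eq_square)
  also have "\<dots> = omega powr (- real n) - omega ^ n - 2 * (X - omega powr (real n / 2)) * c"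
    by (simp only: x2 ox ox2)
  finally have e: "(1 - omega^n) * (1 - 2 * X * c + X^2) = omega powr (- real n) - omega ^ n - 2 * (X - omega powr (real n / 2)) * c" .
  show ?thesis using e[unfolded X_def] unfolding rho_pow .
qed


lemma embi_comb: "embi a b c - of_nat q * embi a' b' c' = embi (a - int q * a') (b - int q * b') (c - int q * c')"
  by (simp add: embi_def algebra_simps)

lemma M_dvd:
  fixes \<beta> :: real and D :: int
  assumes D: "D > 0" and DJ: "real_of_int D \<in> (\<lambda>z. \<beta> * z) ` Zlam"
  shows "(LEAST m::nat. m > 0 \<and> real m \<in> (\<lambda>z. \<beta> * z) ` Zlam) dvd nat D"
proof -
  define J where "J = (\<lambda>z. \<beta> * z) ` Zlam"
  have clos: "x - of_nat q * y \<in> J" if hx: "x \<in> J" and hy: "y \<in> J" for x y q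
  proof -
    obtain a b c where x: "x = \<beta> * embi a b c" using hx unfolding J_def Zlam_embi by auto
    obtain a' b' c' where y: "y = \<beta> * embi a' b' c'" using hy unfolding J_def Zlam_embi by auto
    have "x - of_nat q * y = \<beta> * (embi a b c - of_nat q * embi a' b' c')" unfolding x y by (simp add: algebra_simps)
    also have "\<dots> = \<beta> * embi (a - int q * a') (b - int q * b') (c - int q * c')" unfolding embi_comb ..
    finally show ?thesis unfolding J_def Zlam_embi by blast
  qed
  define m0 where "m0 = nat D"
  have m0: "m0 > 0" "real m0 \<in> J" using D DJ unfolding m0_def J_def by auto
  define M where "M = (LEAST m::nat. m > 0 \<and> real m \<in> J)"
  have M: "M > 0" "real M \<in> J" using LeastI[of "\<lambda>m. m > 0 \<and> real m \<in> J" m0] m0 unfolding M_def by auto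
  have "real (m0 mod M) = real m0 - of_nat (m0 div M) * real M"
  proof -
    have "m0 = m0 div M * M + m0 mod M" by simp
    then have "real m0 = real (m0 div M) * real M + real (m0 mod M)" by (metis of_nat_add of_nat_mult)
    then show ?thesis by simp
  qed
  then have r: "real (m0 mod M) \<in> J" using clos[OF m0(2) M(2)] by simp
  have "m0 mod M = 0"
  proof (rule ccontr)
    assume "m0 mod M \<noteq> 0"
    have LE: "M \<le> k" if "k > 0" "real k \<in> J" for k unfolding M_def using that by (intro Least_le) simp
    have "M \<le> m0 mod M" using LE[of "m0 mod M"] r \<open>m0 mod M \<noteq> 0\<close> by simp
    moreover have "m0 mod M < M" using M(1) by simp
    ultimately show False by simp
  qed
  then show ?thesis unfolding M_def J_def m0_def by (simp add: mod_eq_0_iff_dvd)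
qed

theorem mainTheorem4:
  fixes n :: nat and \<theta> :: real
  assumes "n \<ge> 1"
    and "0 < \<theta>" and "\<theta> < pi"
    and "cos \<theta> = sqrt omega * (5 - omega) / 2"
  shows "finite (I_set n)
    \<and> real (card (I_set n)) = \<bar>fnorm (1 - omega ^ n)\<bar>
    \<and> \<bar>fnorm (1 - omega ^ n)\<bar> = omega powr (- real n) - omega ^ n
         - 2 * (omega powr (- real n / 2) - omega powr (real n / 2)) * cos (real n * \<theta>)
    \<and> M n dvd card (I_set n)"
proof -
  obtain a b c where p: "pw (3*n) = (a,b,c)" by (cases "pw (3*n)") auto
  define A where "A = 1 - a"
  define B where "B = - b"
  define C where "C = - c"
  define D where "D = det3 (rw1 A B C) (rw2 A B C) (rw3 A B C)"
  have on: "omega^n = lam^(3*n)" unfolding omega_def by (simp add: power_mult)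
  have lp: "lam^(3*n) = of_int a + of_int b * lam + of_int c * lam^2" by (rule pw_eval[OF lam3 p])
  have beta: "1 - omega^n = embi A B C" unfolding on lp embi_def A_def B_def C_def by simp
  have beta_emb: "1 - omega^n = emb (of_int A, of_int B, of_int C)" unfolding beta emb_of_int ..
  define f where "f = (\<lambda>x::complex. of_int A + of_int B * x + of_int C * x^2)"
  have fn: "fnorm (1 - omega^n) = Re (f (of_real lam) * f al * f (cnj al))"
    unfolding fnorm_def beta_emb coords_emb prod_roots f_def by simp
  have fD: "f (of_real lam) * f al * f (cnj al) = of_int D"
    unfolding f_def D_def by (rule det_vieta[OF vieta])
  have froot: "f x = 1 - x^(3*n)" if "x^3 = 1 - x - x^2" for x
    unfolding f_def A_def B_def C_def pw_eval[OF that p] by simp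
  have r1: "(of_real lam :: complex)^3 = 1 - of_real lam - (of_real lam)^2"
  proof -
    have "(of_real lam :: complex)^3 = of_real (lam^3)" by simp
    also have "\<dots> = of_real (1 - lam - lam^2)" unfolding lam3 ..
    finally show ?thesis by simp
  qed
  have r2: "al^3 = 1 - al - al^2"
  proof -
    have "al^3 + al^2 + al - 1 = 0" unfolding cubic_factor by simp
    then show ?thesis by (simp add: algebra_simps)
  qed
  have r3: "(cnj al)^3 = 1 - cnj al - (cnj al)^2"
  proof -
    have "(cnj al)^3 + (cnj al)^2 + cnj al - 1 = 0" unfolding cubic_factor by simp
    then show ?thesis by (simp add: algebra_simps)
  qed
  define W where "W = (al^3)^n"
  have fl: "f (of_real lam) = of_real (1 - omega^n)" unfolding froot[OF r1] on by simp
  have fa: "f al = 1 - W" unfolding froot[OF r2] W_def by (simp add: power_mult)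
  have fc: "f (cnj al) = cnj (1 - W)" unfolding froot[OF r3] W_def by (simp add: power_mult)
  have "f (of_real lam) * f al * f (cnj al) = of_real (1 - omega^n) * ((1 - W) * cnj (1 - W))"
    unfolding fl fa fc by (simp add: mult.assoc)
  also have "\<dots> = of_real ((1 - omega^n) * (cmod (1 - W))^2)" unfolding complex_norm_square[symmetric] by simp
  finally have DW: "real_of_int D = (1 - omega^n) * (cmod (1 - W))^2" unfolding fD
    by (metis of_real_eq_iff of_real_of_int_eq)
  have zn': "Re W = rho^n * cos (real n * \<theta>)" "cmod W = rho^n"
    using zn[OF assms(2,3,4), of n] unfolding W_def by auto
  define X where "X = rho^n"
  define cc where "cc = cos (real n * \<theta>)"
  have cmW: "(cmod (1 - W))^2 = 1 - 2 * X * cc + X^2"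
    unfolding cmod_one_minus_sq zn' X_def cc_def by simp
  have X1: "X > 1" unfolding X_def using rho_gt1 assms(1) by (simp add: one_less_power)
  have "X * cc \<le> X" using X1 cos_le_one[of "real n * \<theta>"] unfolding cc_def
    by (simp add: mult_left_le)
  then have "1 - 2 * X * cc + X^2 \<ge> (X - 1)^2" by (simp add: power2_eq_square algebra_simps)
  moreover have "(X - 1)^2 > 0" using X1 by simp
  ultimately have pos2: "1 - 2 * X * cc + X^2 > 0" by linarith
  have on1: "omega^n < 1" using omega_pos omega_lt1 assms(1) by (simp add: power_less_one_iff)
  have Dpos: "real_of_int D > 0" unfolding DW cmW using pos2 on1 by simp
  then have D0: "D > 0" by simp
  have fnD: "fnorm (1 - omega^n) = real_of_int D" unfolding fn fD by simp
  have absf: "\<bar>fnorm (1 - omega^n)\<bar> = real_of_int D" unfolding fnD using Dpos by simp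
  have B0: "embi A B C \<noteq> 0" unfolding beta[symmetric] using on1 by simp
  have Iset: "I_set n = Pi_f ` ((\<lambda>z. z / embi A B C) ` Zlam)" unfolding I_set_def beta ..
  have IC: "finite (I_set n) \<and> card (I_set n) = nat \<bar>D\<bar>"
    unfolding Iset D_def using I_card[OF _ B0] D0 D_def by simp
  have part1: "real (card (I_set n)) = \<bar>fnorm (1 - omega ^ n)\<bar>" using IC absf D0 by simp
  have part2: "\<bar>fnorm (1 - omega ^ n)\<bar> = omega powr (- real n) - omega ^ n
         - 2 * (omega powr (- real n / 2) - omega powr (real n / 2)) * cos (real n * \<theta>)"
    unfolding absf DW cmW X_def cc_def by (rule final_formula)
  obtain z1 z2 z3 where adj: "dot (rw1 A B C) (of_int z1, of_int z2, of_int z3) = of_int D"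
     "dot (rw2 A B C) (of_int z1, of_int z2, of_int z3) = 0" "dot (rw3 A B C) (of_int z1, of_int z2, of_int z3) = 0"
    using adj_col unfolding D_def by blast
  have "emb (of_int D, 0, 0) = embi A B C * emb (of_int z1, of_int z2, of_int z3)"
    using emb_mul[of A B C "(of_int z1, of_int z2, of_int z3)"] unfolding adj .
  then have "real_of_int D = (1 - omega^n) * embi z1 z2 z3" unfolding beta emb_of_int by (simp add: emb_def)
  moreover have "embi z1 z2 z3 \<in> Zlam" unfolding Zlam_embi by blast
  ultimately have DJ: "real_of_int D \<in> (\<lambda>z. (1 - omega^n) * z) ` Zlam" by blast
  have part3: "M n dvd card (I_set n)" unfolding M_def using M_dvd[OF D0 DJ] IC D0 by simp
  show ?thesis using IC part1 part2 part3 by blast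
qed


end
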